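(* Under the standing assumptions below, for every $\eta\in\Theta$, $$|LW(\eta)|\le\mathbf b\langle h\rangle+2W(\eta)<\infty,$$ where $\langle h\rangle=\int_{\mathbb R^d}h(x)dx$.
   Context: Fix $d\in\mathbb N$, $\varepsilon>0$, $G(x)=(1+|x|)^{-d-\varepsilon}$. $\Gamma$ is the set of locally finite subsets of $\mathbb R^d$; $\Gamma_G=\{\gamma\in\Gamma:\sum_{x\in\gamma}G(x)<\infty\}$. Let $b:\mathbb R^d\times\Gamma_G\to[0,\infty)$ be measurable with $\mathbf b:=\sup_{x,\eta}b(x,\eta)<\infty$. The operator $L$ acts on functions $F$ on configurations by $$LF(\eta)=\sum_{x\in\eta}\bigl(F(\eta\setminus\{x\})-F(\eta)\bigr)+\int_{\mathbb R^d}b(x,\eta)\bigl(F(\eta\cup\{x\})-F(\eta)\bigr)dx.$$ Let $K:(0,\infty)\to(0,\infty)$ be non-increasing with $\lim_{q\to0+}K(q)=\infty$ and $\int_r^\infty K(q)q^{d-1}dq<\infty$ for every $r>0$. Let $\phi,h:\mathbb R^d\to(0,\infty)$ be measurable, separated from $0$ on every compact set, with $C_1:=\sup_{x}\int_{\mathbb R^d}\phi(y)K(|x-y|)dy<\infty$ and $2C_1\mathbf b\,\phi(x)\le h(x)\le G(x)$ for all $x$. Set $\psi(x,y)=\phi(x)\phi(y)K(|x-y|)$ ($x\ne y$), $V(\eta)=\sum_{\{x,y\}\subset\eta}\psi(x,y)$ (sum over unordered pairs of distinct points), $\langle h,\eta\rangle=\sum_{x\in\eta}h(x)$, $W(\eta)=\langle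 h,\eta\rangle+V(\eta)\in[0,\infty]$, and $\Theta=\{\eta\in\Gamma_G:V(\eta)<\infty\}$. *)

theory Defs
  imports "HOL-Analysis.Analysis"
begin

text \<open>Points of R^d are elements of a Euclidean space 'a, d = DIM('a).
  Configurations are sets of points.\<close>

definition G_weight :: "real \<Rightarrow> 'a::euclidean_space \<Rightarrow> real" where
  "G_weight \<epsilon> x = (1 + norm x) powr (- (real DIM('a) + \<epsilon>))"

definition locally_finite_conf :: "'a::euclidean_space set \<Rightarrow> bool" where
  "locally_finite_conf \<eta> \<longleftrightarrow> (\<forall>B. bounded B \<longrightarrow> finite (\<eta> \<inter> B))"

definition GammaG :: "real \<Rightarrow> 'a::euclidean_space set set" where
  "GammaG \<epsilon> = {\<eta>. locally_finite_conf \<eta> \<and>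
      (\<Sum>\<^sub>\<infinity>x\<in>\<eta>. ennreal (G_weight \<epsilon> x)) < \<infinity>}"

definition GammaG_M :: "real \<Rightarrow> 'a::euclidean_space set measure" where
  "GammaG_M \<epsilon> = sigma (GammaG \<epsilon>)
     {{\<eta> \<in> GammaG \<epsilon>. card (\<eta> \<inter> B) = n} | B n. B \<in> sets borel \<and> bounded B}"

definition psi :: "('a::euclidean_space \<Rightarrow> real) \<Rightarrow> (real \<Rightarrow> real) \<Rightarrow> 'a \<Rightarrow> 'a \<Rightarrow> real" where
  "psi \<phi> K x y = \<phi> x * \<phi> y * K (dist x y)"

text \<open>Sum over unordered pairs of distinct points = half the sum over ordered pairs
  (psi is symmetric).\<close>
definition Vfun :: "('a::euclidean_space \<Rightarrow> real) \<Rightarrow> (real \<Rightarrow> real) \<Rightarrow> 'a set \<Rightarrow> ennreal" where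
  "Vfun \<phi> K \<eta> = (1/2) * (\<Sum>\<^sub>\<infinity>(x,y)\<in>{(x,y). x \<in> \<eta> \<and> y \<in> \<eta> \<and> x \<noteq> y}. ennreal (psi \<phi> K x y))"

definition pair_h :: "('a \<Rightarrow> real) \<Rightarrow> 'a set \<Rightarrow> ennreal" where
  "pair_h h \<eta> = (\<Sum>\<^sub>\<infinity>x\<in>\<eta>. ennreal (h x))"

definition Wfun :: "('a::euclidean_space \<Rightarrow> real) \<Rightarrow> ('a \<Rightarrow> real) \<Rightarrow> (real \<Rightarrow> real) \<Rightarrow> 'a set \<Rightarrow> ennreal" where
  "Wfun h \<phi> K \<eta> = pair_h h \<eta> + Vfun \<phi> K \<eta>"

definition Theta :: "real \<Rightarrow> ('a::euclidean_space \<Rightarrow> real) \<Rightarrow> (real \<Rightarrow> real) \<Rightarrow> 'a set set" where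
  "Theta \<epsilon> \<phi> K = {\<eta> \<in> GammaG \<epsilon>. Vfun \<phi> K \<eta> < \<infinity>}"

text \<open>The generator L applied to a real-valued function F at \<eta>, and the condition
  that both the sum (unconditional = absolute for reals) and the Lebesgue integral
  exist.\<close>
definition Lop :: "('a::euclidean_space \<Rightarrow> 'a set \<Rightarrow> real) \<Rightarrow> ('a set \<Rightarrow> real) \<Rightarrow> 'a set \<Rightarrow> real" where
  "Lop b F \<eta> = (\<Sum>\<^sub>\<infinity>x\<in>\<eta>. F (\<eta> - {x}) - F \<eta>)
      + (\<integral>x. b x \<eta> * (F (insert x \<eta>) - F \<eta>) \<partial>lborel)"

definition Lop_defined :: "('a::euclidean_space \<Rightarrow> 'a set \<Rightarrow> real) \<Rightarrow> ('a set \<Rightarrow> real) \<Rightarrow> 'a set \<Rightarrow> bool" where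
  "Lop_defined b F \<eta> \<longleftrightarrow> (\<lambda>x. F (\<eta> - {x}) - F \<eta>) summable_on \<eta>
      \<and> integrable lborel (\<lambda>x. b x \<eta> * (F (insert x \<eta>) - F \<eta>))"

end

theory Submission
  imports Defs
begin
lemma ennsum[simp]: "(f :: _ \<Rightarrow> ennreal) summable_on A"
  by (rule nonneg_summable_on_complete) simp

lemma infsum_enn_subset:
  fixes f :: "_ \<Rightarrow> ennreal"
  shows "F \<subseteq> A \<Longrightarrow> infsum f F \<le> infsum f A"
  by (rule infsum_mono_neutral[of f F f A]) auto

lemma infsum_enn_mono:
  fixes f g :: "_ \<Rightarrow> ennreal"
  shows "(\<And>x. x \<in> A \<Longrightarrow> f x \<le> g x) \<Longrightarrow> infsum f A \<le> infsum g A"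
  by (rule infsum_mono[of f A g]) auto

lemma infsum_ennreal_fin:
  fixes f :: "'b \<Rightarrow> real"
  assumes nn: "\<And>x. x\<in>A \<Longrightarrow> f x \<ge> 0" and fin: "(\<Sum>\<^sub>\<infinity>x\<in>A. ennreal (f x)) < \<infinity>"
  shows "f summable_on A" "(\<Sum>\<^sub>\<infinity>x\<in>A. ennreal (f x)) = ennreal (\<Sum>\<^sub>\<infinity>x\<in>A. f x)"
proof -
  let ?S = "(\<Sum>\<^sub>\<infinity>x\<in>A. ennreal (f x))"
  have bdd: "sum f F \<le> enn2real ?S" if F: "finite F" "F \<subseteq> A" for F
  proof -
    have "ennreal (sum f F) = (\<Sum>x\<in>F. ennreal (f x))"
      using F nn by (subst sum_ennreal) auto
    also have "\<dots> = (\<Sum>\<^sub>\<infinity>x\<in>F. ennreal (f x))" using F by simp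
    also have "\<dots> \<le> ?S" using F by (intro infsum_enn_subset)
    finally have "ennreal (sum f F) \<le> ?S" .
    moreover have "sum f F \<ge> 0" using F nn by (intro sum_nonneg) auto
    ultimately show ?thesis using enn2real_mono[of "ennreal (sum f F)" ?S] fin
      by simp
  qed
  show sm: "f summable_on A"
    by (rule nonneg_bdd_above_summable_on) (use nn bdd in \<open>auto simp: bdd_above_def\<close>)
  have "infsum (ennreal \<circ> f) A = ennreal (infsum f A)"
    by (rule infsum_comm_additive_general) (use nn sm in \<open>auto simp: sum_ennreal subset_iff\<close>)
  then show "?S = ennreal (\<Sum>\<^sub>\<infinity>x\<in>A. f x)" by (simp add: o_def)
qed

lemma infsum_enn_countable:
  fixes f :: "_ \<Rightarrow> ennreal"
  assumes A: "countable A"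
  shows "(\<Sum>\<^sub>\<infinity>x\<in>A. f x) = (\<Sum>n. if n \<in> to_nat_on A ` A then f (from_nat_into A n) else 0)"
proof -
  let ?N = "to_nat_on A ` A"
  let ?g = "\<lambda>n. if n \<in> ?N then f (from_nat_into A n) else 0"
  have "infsum (f \<circ> from_nat_into A) ?N = infsum (f \<circ> from_nat_into A \<circ> to_nat_on A) A"
    using A by (intro infsum_reindex) auto
  also have "\<dots> = infsum f A"
    using A by (intro infsum_cong) auto
  finally have 1: "infsum f A = infsum (f \<circ> from_nat_into A) ?N" ..
  have 2: "infsum (f \<circ> from_nat_into A) ?N = infsum ?g UNIV"
    by (intro infsum_cong_neutral) auto
  have "?g sums infsum ?g UNIV"
    by (intro has_sum_imp_sums has_sum_infsum) simp
  then have "suminf ?g = infsum ?g UNIV" by (simp add: sums_iff)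
  with 1 2 show ?thesis by simp
qed

lemma measurable_infsum_enn:
  fixes f :: "'a \<Rightarrow> 'b \<Rightarrow> ennreal"
  assumes A: "countable A" and f: "\<And>y. y \<in> A \<Longrightarrow> (\<lambda>x. f x y) \<in> borel_measurable M"
  shows "(\<lambda>x. \<Sum>\<^sub>\<infinity>y\<in>A. f x y) \<in> borel_measurable M"
proof -
  have "(\<lambda>x. \<Sum>n. if n \<in> to_nat_on A ` A then f x (from_nat_into A n) else 0) \<in> borel_measurable M"
  proof (intro borel_measurable_suminf_order)
    fix n show "(\<lambda>x. if n \<in> to_nat_on A ` A then f x (from_nat_into A n) else 0) \<in> borel_measurable M"
      using A f by (cases "n \<in> to_nat_on A ` A") auto
  qed
  then show ?thesis using infsum_enn_countable[OF A] by simp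
qed

lemma nn_integral_infsum_enn:
  fixes f :: "'a \<Rightarrow> 'b \<Rightarrow> ennreal"
  assumes A: "countable A" and f: "\<And>y. y \<in> A \<Longrightarrow> (\<lambda>x. f x y) \<in> borel_measurable M"
  shows "(\<integral>\<^sup>+x. (\<Sum>\<^sub>\<infinity>y\<in>A. f x y) \<partial>M) = (\<Sum>\<^sub>\<infinity>y\<in>A. \<integral>\<^sup>+x. f x y \<partial>M)"
proof -
  have "(\<integral>\<^sup>+x. (\<Sum>\<^sub>\<infinity>y\<in>A. f x y) \<partial>M) = 
     (\<integral>\<^sup>+x. (\<Sum>n. if n \<in> to_nat_on A ` A then f x (from_nat_into A n) else 0) \<partial>M)"
    using infsum_enn_countable[OF A] by simp
  also have "\<dots> = (\<Sum>n. \<integral>\<^sup>+x. (if n \<in> to_nat_on A ` A then f x (from_nat_into A n) else 0) \<partial>M)"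
  proof (intro nn_integral_suminf)
    fix n show "(\<lambda>x. if n \<in> to_nat_on A ` A then f x (from_nat_into A n) else 0) \<in> borel_measurable M"
      using A f by (cases "n \<in> to_nat_on A ` A") auto
  qed
  also have "\<dots> = (\<Sum>n. if n \<in> to_nat_on A ` A then \<integral>\<^sup>+x. f x (from_nat_into A n) \<partial>M else 0)"
    by (intro suminf_cong) auto
  also have "\<dots> = (\<Sum>\<^sub>\<infinity>y\<in>A. \<integral>\<^sup>+x. f x y \<partial>M)"
    using infsum_enn_countable[OF A, of "\<lambda>y. \<integral>\<^sup>+x. f x y \<partial>M"] by simp
  finally show ?thesis .
qed

lemma half_double_enn: "(1/2::ennreal) * (b + b) = b"
proof -
  have "(1/2::ennreal) * (b + b) = (1/2 * 2) * b" by (simp add: mult_2[symmetric] mult.assoc)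
  also have "(1/2 * 2 :: ennreal) = 1"
    by (simp add: ennreal_divide_times)
  finally show ?thesis by simp
qed

lemma psi_sym: "psi \<phi> K x y = psi \<phi> K y x"
  unfolding psi_def by (simp add: dist_commute mult_ac)

lemma pairs_insert:
  assumes "x \<notin> A"
  shows "{(u,v). u \<in> insert x A \<and> v \<in> insert x A \<and> u \<noteq> v} =
     {(u,v). u \<in> A \<and> v \<in> A \<and> u \<noteq> v} \<union> ((\<lambda>y. (x,y)) ` A \<union> (\<lambda>y. (y,x)) ` A)"
  using assms by auto

lemma Vfun_insert:
  assumes "x \<notin> A"
  shows "Vfun \<phi> K (insert x A) = Vfun \<phi> K A + (\<Sum>\<^sub>\<infinity>y\<in>A. ennreal (psi \<phi> K x y))"
proof -
  let ?g = "\<lambda>(u,v). ennreal (psi \<phi> K u v)"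
  let ?P = "{(u,v). u \<in> A \<and> v \<in> A \<and> u \<noteq> v}"
  let ?S = "(\<Sum>\<^sub>\<infinity>y\<in>A. ennreal (psi \<phi> K x y))"
  have i1: "infsum ?g ((\<lambda>y. (x,y)) ` A) = ?S"
    by (subst infsum_reindex) (auto simp: inj_on_def o_def)
  have i2: "infsum ?g ((\<lambda>y. (y,x)) ` A) = ?S"
    by (subst infsum_reindex) (auto simp: inj_on_def o_def psi_sym)
  have "infsum ?g ({(u,v). u \<in> insert x A \<and> v \<in> insert x A \<and> u \<noteq> v}) =
        infsum ?g ?P + infsum ?g ((\<lambda>y. (x,y)) ` A \<union> (\<lambda>y. (y,x)) ` A)"
    unfolding pairs_insert[OF assms] using assms by (intro infsum_Un_disjoint) auto
  also have "infsum ?g ((\<lambda>y. (x,y)) ` A \<union> (\<lambda>y. (y,x)) ` A) = ?S + ?S"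
    using assms i1 i2 by (subst infsum_Un_disjoint) auto
  finally have E: "infsum ?g ({(u,v). u \<in> insert x A \<and> v \<in> insert x A \<and> u \<noteq> v}) = infsum ?g ?P + (?S + ?S)" .
  have "Vfun \<phi> K (insert x A) = 1/2 * (infsum ?g ?P + (?S + ?S))" unfolding Vfun_def E ..
  also have "\<dots> = 1/2 * infsum ?g ?P + 1/2 * (?S + ?S)" by (rule distrib_left)
  also have "\<dots> = Vfun \<phi> K A + ?S" unfolding half_double_enn Vfun_def ..
  finally show ?thesis .
qed

lemma pair_h_insert:
  assumes "x \<notin> A"
  shows "pair_h h (insert x A) = pair_h h A + ennreal (h x)"
proof -
  have "pair_h h (insert x A) = (\<Sum>\<^sub>\<infinity>y\<in>A \<union> {x}. ennreal (h y))" unfolding pair_h_def by simp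
  also have "\<dots> = pair_h h A + ennreal (h x)"
    unfolding pair_h_def using assms by (subst infsum_Un_disjoint) auto
  finally show ?thesis .
qed

lemma Wfun_insert:
  assumes "x \<notin> A"
  shows "Wfun h \<phi> K (insert x A) = Wfun h \<phi> K A + (ennreal (h x) + (\<Sum>\<^sub>\<infinity>y\<in>A. ennreal (psi \<phi> K x y)))"
  unfolding Wfun_def using pair_h_insert[OF assms] Vfun_insert[OF assms] by (simp add: add_ac)

lemma infsum_enn_sum:
  fixes g :: "_ \<Rightarrow> _ \<Rightarrow> ennreal"
  assumes "finite F"
  shows "(\<Sum>\<^sub>\<infinity>y\<in>A. \<Sum>i\<in>F. g i y) = (\<Sum>i\<in>F. \<Sum>\<^sub>\<infinity>y\<in>A. g i y)"
  using assms
proof (induction F rule: finite_induct)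
  case (insert i F)
  then show ?case by (simp add: infsum_add)
qed simp

lemma geom_finite:
  fixes \<eta> :: "'a::euclidean_space set" and x :: 'a and f :: "'a \<Rightarrow> real" and K :: "real \<Rightarrow> real"
  assumes lf: "locally_finite_conf \<eta>" and x: "x \<notin> \<eta>"
    and fpos: "\<And>y. f y > 0"
    and Kmono: "\<And>p q. 0<p \<Longrightarrow> p \<le> q \<Longrightarrow> K q \<le> K p"
    and slice: "\<And>y0. y0 \<in> \<eta> \<Longrightarrow> (\<Sum>\<^sub>\<infinity>y\<in>\<eta>-{y0}. ennreal (f y * K (dist y y0))) < \<infinity>"
  shows "(\<Sum>\<^sub>\<infinity>y\<in>\<eta>. ennreal (f y * K (dist x y))) < \<infinity>"
proof -
  define P where "P u \<longleftrightarrow> (\<exists>y0\<in>\<eta>. (y0 - x) \<bullet> u > 0)" for u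
  define Y where "Y u = (SOME y0. y0 \<in> \<eta> \<and> (y0 - x) \<bullet> u > 0)" for u
  define c where "c u = ((Y u - x) \<bullet> u) / 2" for u
  have PY: "Y u \<in> \<eta> \<and> (Y u - x) \<bullet> u > 0" if "P u" for u
    using that unfolding P_def Y_def by (metis (mono_tags, lifting) someI_ex)
  define Op where "Op u = (if P u then {v. (Y u - x) \<bullet> v > c u} else {v. u \<bullet> v > 0})" for u
  have "compact (sphere (0::'a) 1)" by simp
  moreover have "open (Op u)" for u unfolding Op_def by (auto intro: open_halfspace_gt)
  moreover have "sphere (0::'a) 1 \<subseteq> (\<Union>u\<in>sphere 0 1. Op u)"
  proof
    fix u :: 'a assume u: "u \<in> sphere 0 1"
    have "u \<in> Op u"
    proof (cases "P u")
      case True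
      then show ?thesis using PY[OF True] unfolding Op_def c_def by (simp add: inner_commute)
    next
      case False
      have "norm u = 1" using u by simp
      then have "u \<noteq> 0" by (metis norm_zero zero_neq_one)
      then have "u \<bullet> u > 0" by simp
      then show ?thesis using False unfolding Op_def by simp
    qed
    then show "u \<in> (\<Union>u\<in>sphere 0 1. Op u)" using u by blast
  qed
  ultimately obtain U where U: "U \<subseteq> sphere 0 1" "finite U" "sphere 0 1 \<subseteq> (\<Union>u\<in>U. Op u)"
    by (rule compactE_image)
  define U1 where "U1 = {u\<in>U. P u}"
  define F where "F = Y ` U1"
  have finF: "finite F" unfolding F_def U1_def using U by auto
  have Fsub: "F \<subseteq> \<eta>" unfolding F_def U1_def using PY by auto
  define R where "R = 1 + (\<Sum>u\<in>U1. (norm (Y u - x))\<^sup>2 / (2 * c u))"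
  have cpos: "c u > 0" if "u \<in> U1" for u using PY that unfolding U1_def c_def by auto
  have nnq: "0 \<le> (norm (Y u - x))\<^sup>2 / (2 * c u)" if "u \<in> U1" for u
    using cpos[OF that] by (intro divide_nonneg_pos) auto
  have Rge: "(norm (Y u - x))\<^sup>2 / (2 * c u) \<le> R" if "u \<in> U1" for u
  proof -
    have "(norm (Y u - x))\<^sup>2 / (2 * c u) \<le> (\<Sum>u\<in>U1. (norm (Y u - x))\<^sup>2 / (2 * c u))"
      using that U(2) nnq unfolding U1_def by (intro member_le_sum) (auto simp: U1_def)
    then show ?thesis unfolding R_def by simp
  qed
  define T where "T y0 = {y\<in>\<eta>-{y0}. dist y y0 \<le> dist x y}" for y0
  define B0 where "B0 = (\<eta> \<inter> cball x R) \<union> F"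
  have finB0: "finite B0" unfolding B0_def using lf finF unfolding locally_finite_conf_def by auto
  have far: "\<exists>y0\<in>F. y \<in> T y0" if y: "y \<in> \<eta>" "y \<notin> B0" for y
  proof -
    have yR: "norm (y - x) > R" using y unfolding B0_def by (auto simp: dist_norm norm_minus_commute)
    have R0: "R > 0" unfolding R_def using nnq by (auto intro!: add_pos_nonneg sum_nonneg)
    have yx: "y \<noteq> x" using x y by auto
    define v where "v = (1 / norm (y - x)) *\<^sub>R (y - x)"
    have "v \<in> sphere 0 1" using yx unfolding v_def by simp
    then obtain u where u: "u \<in> U" "v \<in> Op u" using U(3) by blast
    show ?thesis
    proof (cases "P u")
      case False
      then have "u \<bullet> v > 0" using u unfolding Op_def by simp
      then have "(y - x) \<bullet> u > 0" using yx unfolding v_def by (simp add: inner_commute zero_less_divide_iff)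
      then have "P u" using y unfolding P_def by blast
      with False show ?thesis by simp
    next
      case True
      have u1: "u \<in> U1" using True u unfolding U1_def by simp
      define y0 where "y0 = Y u"
      have y0F: "y0 \<in> F" unfolding F_def y0_def using u1 by simp
      have cp: "c u > 0" using cpos u1 .
      have "(y0 - x) \<bullet> v > c u" using u True unfolding Op_def y0_def by simp
      moreover have "(y0 - x) \<bullet> v = ((y0 - x) \<bullet> (y - x)) / norm (y - x)"
        unfolding v_def inner_scaleR_right by simp
      moreover have "norm (y - x) > 0" using yx by simp
      ultimately have ip: "(y0 - x) \<bullet> (y - x) > c u * norm (y - x)"
        by (simp add: pos_less_divide_eq)
      have "(norm (y0 - x))\<^sup>2 / (2 * c u) \<le> R" using Rge[OF u1] unfolding y0_def .
      then have "(norm (y0 - x))\<^sup>2 \<le> R * (2 * c u)" using cp by (simp add: divide_le_eq)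
      also have "\<dots> < norm (y - x) * (2 * c u)" using yR cp by simp
      finally have lt: "(norm (y0 - x))\<^sup>2 < 2 * c u * norm (y - x)" by (simp add: mult_ac)
      have "(dist y y0)\<^sup>2 = (norm ((y - x) - (y0 - x)))\<^sup>2" by (simp add: dist_norm)
      also have "\<dots> = (norm (y - x))\<^sup>2 - 2 * ((y0 - x) \<bullet> (y - x)) + (norm (y0 - x))\<^sup>2"
        by (simp add: power2_norm_eq_inner inner_diff_left inner_diff_right inner_commute algebra_simps)
      also have "\<dots> < (norm (y - x))\<^sup>2" using ip lt by simp
      finally have "(dist y y0)\<^sup>2 < (dist x y)\<^sup>2" by (simp add: dist_norm norm_minus_commute)
      then have "dist y y0 < dist x y" by (simp add: power_less_imp_less_base)
      moreover have "y \<noteq> y0" using y y0F unfolding B0_def by auto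
      ultimately have "y \<in> T y0" using y unfolding T_def by auto
      with y0F show ?thesis by blast
    qed
  qed
  let ?g = "\<lambda>y. ennreal (f y * K (dist x y))"
  let ?h = "\<lambda>y0 y. ennreal (f y * K (dist y y0))"
  have pw: "?g y \<le> indicator B0 y * ?g y + (\<Sum>y0\<in>F. indicator (T y0) y * ?h y0 y)" if y: "y \<in> \<eta>" for y
  proof (cases "y \<in> B0")
    case True then show ?thesis by simp
  next
    case False
    then obtain y0 where y0: "y0 \<in> F" "y \<in> T y0" using far y by blast
    have d: "0 < dist y y0" "dist y y0 \<le> dist x y" using y0 unfolding T_def by auto
    have "?g y \<le> ?h y0 y"
      using Kmono[OF d] fpos[of y] by (intro ennreal_leI mult_left_mono) (auto simp: less_imp_le)
    also have "\<dots> = indicator (T y0) y * ?h y0 y" using y0 by simp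
    also have "\<dots> \<le> (\<Sum>y0\<in>F. indicator (T y0) y * ?h y0 y)"
      using finF y0 by (intro member_le_sum) auto
    finally show ?thesis by (simp add: add_increasing)
  qed
  have "(\<Sum>\<^sub>\<infinity>y\<in>\<eta>. ?g y) \<le> (\<Sum>\<^sub>\<infinity>y\<in>\<eta>. indicator B0 y * ?g y + (\<Sum>y0\<in>F. indicator (T y0) y * ?h y0 y))"
    using pw by (rule infsum_enn_mono)
  also have "\<dots> = (\<Sum>\<^sub>\<infinity>y\<in>\<eta>. indicator B0 y * ?g y) + (\<Sum>y0\<in>F. \<Sum>\<^sub>\<infinity>y\<in>\<eta>. indicator (T y0) y * ?h y0 y)"
    using finF by (simp only: infsum_add[OF ennsum ennsum] infsum_enn_sum)
  also have "\<dots> < \<infinity>"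
  proof -
    have "(\<Sum>\<^sub>\<infinity>y\<in>\<eta>. indicator B0 y * ?g y) = (\<Sum>\<^sub>\<infinity>y\<in>\<eta> \<inter> B0. ?g y)"
      by (intro infsum_cong_neutral) auto
    also have "\<dots> = (\<Sum>y\<in>\<eta> \<inter> B0. ?g y)" using finB0 by simp
    also have "\<dots> < top" using finB0 by simp
    finally have a: "(\<Sum>\<^sub>\<infinity>y\<in>\<eta>. indicator B0 y * ?g y) < top" .
    have b: "(\<Sum>\<^sub>\<infinity>y\<in>\<eta>. indicator (T y0) y * ?h y0 y) < top" if y0: "y0 \<in> F" for y0
    proof -
      have "(\<Sum>\<^sub>\<infinity>y\<in>\<eta>. indicator (T y0) y * ?h y0 y) = (\<Sum>\<^sub>\<infinity>y\<in>T y0. ?h y0 y)"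
        unfolding T_def by (intro infsum_cong_neutral) auto
      also have "\<dots> \<le> (\<Sum>\<^sub>\<infinity>y\<in>\<eta>-{y0}. ?h y0 y)"
        unfolding T_def by (intro infsum_enn_subset) auto
      also have "\<dots> < \<infinity>" using slice y0 Fsub by auto
      finally show ?thesis by simp
    qed
    show ?thesis using a b finF by simp
  qed
  finally show ?thesis .
qed

lemma G_pointwise:
  fixes x :: "'a::euclidean_space"
  assumes eps: "\<epsilon> > 0"
  defines "s \<equiv> real DIM('a) + \<epsilon>"
  shows "\<exists>k. x \<in> ball 0 (2^k) \<and> G_weight \<epsilon> x \<le> 2 powr (s * (1 - real k))"
proof -
  have s0: "s > 0" unfolding s_def using eps by simp
  obtain n where n: "norm x < 2 ^ n" using real_arch_pow[of 2 "norm x"] by auto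
  define k where "k = (LEAST k. norm x < (2::real) ^ k)"
  have k: "norm x < 2 ^ k" unfolding k_def by (rule LeastI[of _ n]) (rule n)
  have low: "1 + norm x \<ge> 2 powr (real k - 1)"
  proof (cases k)
    case 0
    then have "2 powr (real k - 1) = 1/2" by (simp add: powr_minus_divide)
    then show ?thesis using norm_ge_zero[of x] by linarith
  next
    case (Suc j)
    have "\<not> norm x < (2::real) ^ j" unfolding k_def
      using not_less_Least[of j "\<lambda>k. norm x < (2::real) ^ k"] Suc k_def by auto
    then have "norm x \<ge> 2 ^ j" by simp
    moreover have "2 powr (real k - 1) = 2 ^ j" using Suc by (simp add: powr_realpow)
    ultimately show ?thesis by simp
  qed
  have "G_weight \<epsilon> x = (1 + norm x) powr (- s)" unfolding G_weight_def s_def by simp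
  also have "\<dots> \<le> (2 powr (real k - 1)) powr (- s)"
    using low s0 by (intro powr_mono2') auto
  also have "\<dots> = 2 powr (s * (1 - real k))" by (simp add: powr_powr algebra_simps)
  finally show ?thesis using k by auto
qed

lemma G_integral_finite:
  assumes eps: "\<epsilon> > 0"
  shows "(\<integral>\<^sup>+x. ennreal (G_weight \<epsilon> (x::'a::euclidean_space)) \<partial>lborel) < \<infinity>"
proof -
  define s where "s = real DIM('a) + \<epsilon>"
  define c where "c k = 2 powr (s * (1 - real k))" for k :: nat
  define V where "V = measure lborel (ball (0::'a) 1)"
  define q where "q = (2::real) powr (- \<epsilon>)"
  have q: "0 \<le> q" "q < 1" unfolding q_def using eps by (auto simp: powr_minus_divide)
  have pw: "ennreal (G_weight \<epsilon> x) \<le> (\<Sum>k. ennreal (c k) * indicator (ball (0::'a) (2^k)) x)" for x :: 'a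
  proof -
    obtain k where k: "x \<in> ball 0 (2^k)" "G_weight \<epsilon> x \<le> c k"
      using G_pointwise[OF eps, of x] unfolding c_def s_def by auto
    have "ennreal (G_weight \<epsilon> x) \<le> ennreal (c k) * indicator (ball (0::'a) (2^k)) x"
      using k by (simp add: ennreal_leI)
    also have "\<dots> \<le> (\<Sum>k. ennreal (c k) * indicator (ball (0::'a) (2^k)) x)"
      using sum_le_suminf[OF summableI, of "{k}" "\<lambda>k. ennreal (c k) * indicator (ball (0::'a) (2^k)) x"] by (simp only: sum.insert[OF finite.emptyI empty_iff[THEN iffD1, THEN notI]] sum.empty add_0_right) (blast intro: zero_le)
    finally show ?thesis .
  qed
  have m: "emeasure lborel (ball (0::'a) (2^k)) = ennreal ((2^k)^DIM('a) * V)" for k :: nat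
  proof -
    have "emeasure lborel (ball (0::'a) (2^k)) = ennreal (measure lborel (ball (0::'a) (2^k)))"
      using emeasure_lborel_ball_finite[of "0::'a" "2^k"] by (intro emeasure_eq_ennreal_measure) (simp add: less_top)
    also have "\<dots> = ennreal ((2^k)^DIM('a) * V)" unfolding V_def by (subst content_ball_conv_unit_ball) auto
    finally show ?thesis .
  qed
  have ck: "c k * (2^k)^DIM('a) * V = (2 powr s * V) * q ^ k" for k :: nat
  proof -
    have e1: "(2::real)^k = 2 powr real k" by (simp add: powr_realpow)
    have e2: "(2 powr real k :: real)^DIM('a) = 2 powr (real DIM('a) * real k)"
      by (subst powr_power) auto
    have e3: "q ^ k = 2 powr (real k * (- \<epsilon>))"
      unfolding q_def by (subst powr_power) auto
    have e4: "s * (1 - real k) + real DIM('a) * real k = s + real k * (- \<epsilon>)"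
      unfolding s_def by (simp add: algebra_simps)
    have "c k * (2^k)^DIM('a) = 2 powr (s * (1 - real k) + real DIM('a) * real k)"
      unfolding c_def e1 e2 powr_add ..
    also have "\<dots> = 2 powr s * q ^ k" unfolding e4 e3 powr_add ..
    finally show ?thesis by (simp add: mult_ac)
  qed
  have V0: "V \<ge> 0" unfolding V_def by simp
  have ik: "(\<integral>\<^sup>+x. ennreal (c k) * indicator (ball (0::'a) (2^k)) x \<partial>lborel) = ennreal ((2 powr s * V) * q^k)" for k
  proof -
    have "(\<integral>\<^sup>+x. ennreal (c k) * indicator (ball (0::'a) (2^k)) x \<partial>lborel) = ennreal (c k) * ennreal ((2^k)^DIM('a) * V)"
      by (simp add: nn_integral_cmult_indicator m)
    also have "\<dots> = ennreal (c k * ((2^k)^DIM('a) * V))"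
      using V0 by (subst ennreal_mult) (auto simp: c_def)
    also have "\<dots> = ennreal ((2 powr s * V) * q^k)" using ck[of k] by (metis mult.assoc)
    finally show ?thesis .
  qed
  have "(\<integral>\<^sup>+x. ennreal (G_weight \<epsilon> (x::'a)) \<partial>lborel) \<le> (\<integral>\<^sup>+x. (\<Sum>k. ennreal (c k) * indicator (ball (0::'a) (2^k)) x) \<partial>lborel)"
    by (rule nn_integral_mono) (rule pw)
  also have "\<dots> = (\<Sum>k. \<integral>\<^sup>+x. ennreal (c k) * indicator (ball (0::'a) (2^k)) x \<partial>lborel)"
    by (intro nn_integral_suminf) (auto intro!: borel_measurable_times_ennreal borel_measurable_indicator)
  also have "\<dots> = (\<Sum>k. ennreal ((2 powr s * V) * q ^ k))"
    by (intro suminf_cong ik)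
  also have "\<dots> < \<infinity>"
    using q V0 by (simp add: less_top[symmetric] ennreal_suminf_neq_top summable_mult summable_geometric)
  finally show ?thesis .
qed

lemma lf_countable:
  fixes \<eta> :: "'a::euclidean_space set"
  assumes "locally_finite_conf \<eta>"
  shows "countable \<eta>"
proof -
  have "\<eta> = (\<Union>n::nat. \<eta> \<inter> cball 0 (real n))"
  proof (intro equalityI subsetI)
    fix x assume "x \<in> \<eta>"
    moreover obtain n :: nat where "norm x \<le> real n" using real_arch_simple by blast
    ultimately show "x \<in> (\<Union>n::nat. \<eta> \<inter> cball 0 (real n))" by auto
  qed auto
  moreover have "countable (\<Union>n::nat. \<eta> \<inter> cball 0 (real n))"
  proof (intro countable_UN)
    fix n :: nat
    have "finite (\<eta> \<inter> cball 0 (real n))" using assms unfolding locally_finite_conf_def by auto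
    then show "countable (\<eta> \<inter> cball 0 (real n))" by (rule countable_finite)
  qed simp
  ultimately show ?thesis by simp
qed

lemma K_meas:
  fixes K :: "real \<Rightarrow> real"
  assumes Kmono: "\<And>p q. 0<p \<Longrightarrow> p \<le> q \<Longrightarrow> K q \<le> K p"
  shows "(\<lambda>q. K (max q 0)) \<in> borel_measurable borel"
proof -
  have "(\<lambda>q. - K (max q 0)) \<in> borel_measurable borel"
  proof (rule borel_measurable_piecewise_mono[of "{{..0}, {0<..}}"])
    show "mono_on c (\<lambda>q. - K (max q 0))" if "c \<in> {{..0}, {0<..}}" for c :: "real set"
      using that by (auto simp: mono_on_def intro: Kmono)
  qed auto
  then have "(\<lambda>q. - (- K (max q 0))) \<in> borel_measurable borel" by measurable
  then show ?thesis by simp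
qed

lemma psi_meas:
  fixes \<phi> :: "'a::euclidean_space \<Rightarrow> real"
  assumes Kmono: "\<And>p q. 0<p \<Longrightarrow> p \<le> q \<Longrightarrow> K q \<le> K p"
    and phi_meas: "\<phi> \<in> borel_measurable borel"
  shows "(\<lambda>x. psi \<phi> K x y) \<in> borel_measurable borel"
proof -
  have Km[measurable]: "(\<lambda>q. K (max q 0)) \<in> borel_measurable borel" by (rule K_meas[OF Kmono])
  have [measurable]: "\<phi> \<in> borel_measurable borel" by (rule phi_meas)
  have "(\<lambda>x. \<phi> x * \<phi> y * K (max (dist x y) 0)) \<in> borel_measurable borel" by measurable
  then show ?thesis unfolding psi_def by simp
qed

lemma phiK_meas:
  fixes \<phi> :: "'a::euclidean_space \<Rightarrow> real"
  assumes Kmono: "\<And>p q. 0<p \<Longrightarrow> p \<le> q \<Longrightarrow> K q \<le> K p"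
    and phi_meas: "\<phi> \<in> borel_measurable borel"
  shows "(\<lambda>x. \<phi> x * K (dist y x)) \<in> borel_measurable borel"
proof -
  have Km[measurable]: "(\<lambda>q. K (max q 0)) \<in> borel_measurable borel" by (rule K_meas[OF Kmono])
  have [measurable]: "\<phi> \<in> borel_measurable borel" by (rule phi_meas)
  have "(\<lambda>x. \<phi> x * K (max (dist y x) 0)) \<in> borel_measurable borel" by measurable
  then show ?thesis by simp
qed

lemma infsum_ennreal_real:
  fixes f :: "'b \<Rightarrow> real"
  assumes nn: "\<And>x. x\<in>A \<Longrightarrow> f x \<ge> 0" and sm: "f summable_on A"
  shows "(\<Sum>\<^sub>\<infinity>x\<in>A. ennreal (f x)) = ennreal (\<Sum>\<^sub>\<infinity>x\<in>A. f x)"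
proof -
  have "infsum (ennreal \<circ> f) A = ennreal (infsum f A)"
    by (rule infsum_comm_additive_general) (use nn sm in \<open>auto simp: sum_ennreal subset_iff\<close>)
  then show ?thesis by (simp add: o_def)
qed

lemma infsum_enn_cmult:
  fixes f :: "_ \<Rightarrow> ennreal"
  assumes c: "c < top"
  shows "(\<Sum>\<^sub>\<infinity>y\<in>A. c * f y) = c * infsum f A"
proof -
  have "infsum ((\<lambda>z. c * z) \<circ> f) A = c * infsum f A"
  proof (rule infsum_comm_additive_general)
    show "isCont (\<lambda>z. c * z) (infsum f A)"
      unfolding isCont_def by (rule ennreal_tendsto_cmult[OF c]) (rule tendsto_ident_at)
  qed (auto simp: sum_distrib_left)
  then show ?thesis by (simp add: o_def)
qed

theorem lemma4p6:
  fixes \<epsilon> :: real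
    and b :: "'a::euclidean_space \<Rightarrow> 'a set \<Rightarrow> real"
    and K :: "real \<Rightarrow> real"
    and \<phi> h :: "'a \<Rightarrow> real"
    and bb C1 :: real
    and \<eta> :: "'a set"
  assumes eps: "\<epsilon> > 0"
    and b_meas: "(\<lambda>(x, \<xi>). b x \<xi>) \<in> borel_measurable (lborel \<Otimes>\<^sub>M GammaG_M \<epsilon>)"
    and b_nonneg: "\<And>x \<xi>. \<xi> \<in> GammaG \<epsilon> \<Longrightarrow> b x \<xi> \<ge> 0"
    and b_bdd: "bdd_above ((\<lambda>(x, \<xi>). b x \<xi>) ` (UNIV \<times> GammaG \<epsilon>))"
    and bb_def: "bb = (SUP p \<in> UNIV \<times> GammaG \<epsilon>. b (fst p) (snd p))"
    and K_pos: "\<And>q. q > 0 \<Longrightarrow> K q > 0"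
    and K_mono: "\<And>p q. 0 < p \<Longrightarrow> p \<le> q \<Longrightarrow> K q \<le> K p"
    and K_lim: "filterlim K at_top (at_right 0)"
    and K_int: "\<And>r. r > 0 \<Longrightarrow>
        (\<integral>\<^sup>+ q. indicator {r..} q * ennreal (K q * q ^ (DIM('a) - 1)) \<partial>lborel) < \<infinity>"
    and phi_meas: "\<phi> \<in> borel_measurable borel"
    and h_meas: "h \<in> borel_measurable borel"
    and phi_pos: "\<And>x. \<phi> x > 0"
    and h_pos: "\<And>x. h x > 0"
    and phi_sep: "\<And>C. compact C \<Longrightarrow> \<exists>c>0. \<forall>x\<in>C. c \<le> \<phi> x"
    and h_sep: "\<And>C. compact C \<Longrightarrow> \<exists>c>0. \<forall>x\<in>C. c \<le> h x"
    and C1_fin: "(SUP x. \<integral>\<^sup>+ y. ennreal (\<phi> y * K (dist x y)) \<partial>lborel) < \<infinity>"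
    and C1_def: "C1 = enn2real (SUP x. \<integral>\<^sup>+ y. ennreal (\<phi> y * K (dist x y)) \<partial>lborel)"
    and h_lower: "\<And>x. 2 * C1 * bb * \<phi> x \<le> h x"
    and h_upper: "\<And>x. h x \<le> G_weight \<epsilon> x"
    and eta: "\<eta> \<in> Theta \<epsilon> \<phi> K"
  shows "(\<integral>\<^sup>+ x. ennreal (h x) \<partial>lborel) < \<infinity>
     \<and> Wfun h \<phi> K \<eta> < \<infinity>
     \<and> (AE x in lborel. Wfun h \<phi> K (insert x \<eta>) < \<infinity>)
     \<and> Lop_defined b (\<lambda>\<xi>. enn2real (Wfun h \<phi> K \<xi>)) \<eta>
     \<and> \<bar>Lop b (\<lambda>\<xi>. enn2real (Wfun h \<phi> K \<xi>)) \<eta>\<bar>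
         \<le> bb * enn2real (\<integral>\<^sup>+ x. ennreal (h x) \<partial>lborel) + 2 * enn2real (Wfun h \<phi> K \<eta>)"
proof -
  have etaG: "\<eta> \<in> GammaG \<epsilon>" and Vfin: "Vfun \<phi> K \<eta> < \<infinity>" using eta unfolding Theta_def by auto
  have lf: "locally_finite_conf \<eta>" and Gfin: "(\<Sum>\<^sub>\<infinity>x\<in>\<eta>. ennreal (G_weight \<epsilon> x)) < \<infinity>"
    using etaG unfolding GammaG_def by auto
  have cnt: "countable \<eta>" by (rule lf_countable[OF lf])
  have bfun: "(\<lambda>(x, \<xi>). b x \<xi>) = (\<lambda>p. b (fst p) (snd p))" by auto
  have b_le: "b x \<eta> \<le> bb" for x
  proof -
    have "(x, \<eta>) \<in> UNIV \<times> GammaG \<epsilon>" using etaG by simp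
    then show ?thesis unfolding bb_def using b_bdd unfolding bfun
      by (metis (no_types, lifting) cSUP_upper fst_conv snd_conv)
  qed
  have b_nn: "0 \<le> b x \<eta>" for x using b_nonneg etaG by simp
  have bb0: "0 \<le> bb" using b_nn b_le order_trans by blast
  let ?SUP = "(SUP x. \<integral>\<^sup>+ y. ennreal (\<phi> y * K (dist x y)) \<partial>lborel)"
  have C1e: "ennreal C1 = ?SUP" using C1_fin unfolding C1_def by simp
  have C1_bound: "(\<integral>\<^sup>+ y. ennreal (\<phi> y * K (dist x y)) \<partial>lborel) \<le> ennreal C1" for x
    unfolding C1e by (rule SUP_upper) simp
  have C10: "0 \<le> C1" unfolding C1_def by simp
  have hint_le: "(\<integral>\<^sup>+x. ennreal (h x) \<partial>lborel) \<le> (\<integral>\<^sup>+x. ennreal (G_weight \<epsilon> (x::'a)) \<partial>lborel)"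
    by (intro nn_integral_mono ennreal_leI h_upper)
  have hint: "(\<integral>\<^sup>+x. ennreal (h x) \<partial>lborel) < \<infinity>"
    using le_less_trans[OF hint_le G_integral_finite[OF eps]] .
  define H where "H = enn2real (\<integral>\<^sup>+x. ennreal (h x) \<partial>lborel)"
  have He: "(\<integral>\<^sup>+x. ennreal (h x) \<partial>lborel) = ennreal H" unfolding H_def using hint by simp
  have H0: "0 \<le> H" unfolding H_def by simp
  have ph_le: "pair_h h \<eta> \<le> (\<Sum>\<^sub>\<infinity>x\<in>\<eta>. ennreal (G_weight \<epsilon> x))"
    unfolding pair_h_def by (intro infsum_enn_mono ennreal_leI h_upper)
  have ph_fin: "pair_h h \<eta> < \<infinity>" using le_less_trans[OF ph_le Gfin] .
  have W_fin: "Wfun h \<phi> K \<eta> < \<infinity>" unfolding Wfun_def using ph_fin Vfin by simp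
  define P where "P = enn2real (pair_h h \<eta>)"
  define Vr where "Vr = enn2real (Vfun \<phi> K \<eta>)"
  have Pe: "pair_h h \<eta> = ennreal P" unfolding P_def using ph_fin by simp
  have Ve: "Vfun \<phi> K \<eta> = ennreal Vr" unfolding Vr_def using Vfin by simp
  have P0: "0 \<le> P" and Vr0: "0 \<le> Vr" unfolding P_def Vr_def by simp_all
  have FW: "enn2real (Wfun h \<phi> K \<eta>) = P + Vr"
    unfolding Wfun_def Pe Ve using P0 Vr0 by (subst enn2real_plus) auto

  let ?Pr = "{(x,y). x \<in> \<eta> \<and> y \<in> \<eta> \<and> x \<noteq> y}"
  let ?S = "(\<Sum>\<^sub>\<infinity>(x,y)\<in>?Pr. ennreal (psi \<phi> K x y))"
  have VS: "Vfun \<phi> K \<eta> = 1/2 * ?S" unfolding Vfun_def ..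
  have two: "2 * (1/2::ennreal) = 1" by (subst mult.commute) (simp add: ennreal_divide_times)
  have S2: "?S = 2 * Vfun \<phi> K \<eta>" unfolding VS mult.assoc[symmetric] two by simp
  have Sfin: "?S < \<infinity>" using Vfin unfolding S2 by (simp add: ennreal_mult_less_top)

  have slicePsi: "(\<Sum>\<^sub>\<infinity>y\<in>\<eta>-{y0}. ennreal (psi \<phi> K y0 y)) \<le> ?S" if y0: "y0 \<in> \<eta>" for y0
  proof -
    have "(\<Sum>\<^sub>\<infinity>y\<in>\<eta>-{y0}. ennreal (psi \<phi> K y0 y)) =
          (\<Sum>\<^sub>\<infinity>p\<in>(\<lambda>y. (y0,y)) ` (\<eta>-{y0}). (\<lambda>(x,y). ennreal (psi \<phi> K x y)) p)"
      by (subst infsum_reindex) (auto simp: inj_on_def o_def)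
    also have "\<dots> \<le> ?S" using y0 by (intro infsum_enn_subset) auto
    finally show ?thesis .
  qed
  have slice: "(\<Sum>\<^sub>\<infinity>y\<in>\<eta>-{y0}. ennreal (\<phi> y * K (dist y y0))) < \<infinity>" if y0: "y0 \<in> \<eta>" for y0
  proof -
    note slicePsi[OF y0]
    then have a: "(\<Sum>\<^sub>\<infinity>y\<in>\<eta>-{y0}. ennreal (psi \<phi> K y0 y)) < \<infinity>" using Sfin by (rule le_less_trans)
    have "(\<Sum>\<^sub>\<infinity>y\<in>\<eta>-{y0}. ennreal (\<phi> y * K (dist y y0))) =
          (\<Sum>\<^sub>\<infinity>y\<in>\<eta>-{y0}. ennreal (1/\<phi> y0) * ennreal (psi \<phi> K y0 y))"
    proof (intro infsum_cong)
      fix y assume "y \<in> \<eta> - {y0}"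
      have pe: "psi \<phi> K y0 y = \<phi> y0 * (\<phi> y * K (dist y y0))" unfolding psi_def by (simp add: dist_commute mult_ac)
      have "ennreal (1/\<phi> y0) * ennreal (psi \<phi> K y0 y) = ennreal (1/\<phi> y0 * (\<phi> y0 * (\<phi> y * K (dist y y0))))"
        unfolding pe by (rule ennreal_mult'[symmetric]) (use phi_pos[of y0] in simp)
      also have "\<dots> = ennreal (\<phi> y * K (dist y y0))" using phi_pos[of y0] by simp
      finally show "ennreal (\<phi> y * K (dist y y0)) = ennreal (1/\<phi> y0) * ennreal (psi \<phi> K y0 y)" by simp
    qed
    also have "\<dots> = ennreal (1/\<phi> y0) * (\<Sum>\<^sub>\<infinity>y\<in>\<eta>-{y0}. ennreal (psi \<phi> K y0 y))"
      by (rule infsum_enn_cmult) simp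
    also have "\<dots> < \<infinity>" using a by (simp add: ennreal_mult_less_top)
    finally show ?thesis .
  qed

  define D where "D x = ennreal (h x) + (\<Sum>\<^sub>\<infinity>y\<in>\<eta>. ennreal (psi \<phi> K x y))" for x
  have Dfin: "D x < \<infinity>" if x: "x \<notin> \<eta>" for x
  proof -
    have g: "(\<Sum>\<^sub>\<infinity>y\<in>\<eta>. ennreal (\<phi> y * K (dist x y))) < \<infinity>"
      by (rule geom_finite[OF lf x phi_pos K_mono slice])
    have "(\<Sum>\<^sub>\<infinity>y\<in>\<eta>. ennreal (psi \<phi> K x y)) = (\<Sum>\<^sub>\<infinity>y\<in>\<eta>. ennreal (\<phi> x) * ennreal (\<phi> y * K (dist x y)))"
      using phi_pos[of x] by (intro infsum_cong) (simp add: psi_def ennreal_mult' mult.assoc)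
    also have "\<dots> = ennreal (\<phi> x) * (\<Sum>\<^sub>\<infinity>y\<in>\<eta>. ennreal (\<phi> y * K (dist x y)))"
      by (rule infsum_enn_cmult) simp
    also have "\<dots> < \<infinity>" using g by (simp add: ennreal_mult_less_top)
    finally show ?thesis unfolding D_def by simp
  qed
  have Wins: "Wfun h \<phi> K (insert x \<eta>) = Wfun h \<phi> K \<eta> + D x" if "x \<notin> \<eta>" for x
    unfolding D_def by (rule Wfun_insert[OF that])
  have AEpart: "AE x in lborel. Wfun h \<phi> K (insert x \<eta>) < \<infinity>"
  proof (rule AE_I2)
    fix x show "Wfun h \<phi> K (insert x \<eta>) < \<infinity>"
    proof (cases "x \<in> \<eta>")
      case True then show ?thesis using W_fin by (simp add: insert_absorb)
    next
      case False then show ?thesis using W_fin Dfin[OF False] by (simp add: Wins)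
    qed
  qed

  define E where "E x = ennreal (h x) + (\<Sum>\<^sub>\<infinity>y\<in>\<eta>-{x}. ennreal (psi \<phi> K x y))" for x
  have Wrem: "Wfun h \<phi> K \<eta> = Wfun h \<phi> K (\<eta> - {x}) + E x" if "x \<in> \<eta>" for x
  proof -
    have "Wfun h \<phi> K (insert x (\<eta> - {x})) = Wfun h \<phi> K (\<eta> - {x}) + E x"
      unfolding E_def by (rule Wfun_insert) simp
    then show ?thesis using that by (simp add: insert_absorb)
  qed
  have Efin: "E x < top" and Wremfin: "Wfun h \<phi> K (\<eta> - {x}) < top" if "x \<in> \<eta>" for x
    using W_fin Wrem[OF that] by auto
  let ?F = "\<lambda>\<xi>. enn2real (Wfun h \<phi> K \<xi>)"
  define e where "e x = enn2real (E x)" for x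
  have Fdiff: "?F (\<eta> - {x}) - ?F \<eta> = - e x" if "x \<in> \<eta>" for x
    using Wrem[OF that] Efin[OF that] Wremfin[OF that] unfolding e_def by (simp add: enn2real_plus)
  have Ee: "ennreal (e x) = E x" if "x \<in> \<eta>" for x
    using Efin[OF that] unfolding e_def by simp
  have psi_nn: "0 \<le> psi \<phi> K x y" if "x \<noteq> y" for x y
    using phi_pos[of x] phi_pos[of y] K_pos[of "dist x y"] that unfolding psi_def by simp
  have SigmaS: "(\<Sum>\<^sub>\<infinity>x\<in>\<eta>. \<Sum>\<^sub>\<infinity>y\<in>\<eta>-{x}. ennreal (psi \<phi> K x y)) = ?S"
  proof -
    have PrS: "?Pr = Sigma \<eta> (\<lambda>x. \<eta> - {x})" by auto
    let ?q = "\<lambda>p. psi \<phi> K (fst p) (snd p)"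
    have qS: "(\<Sum>\<^sub>\<infinity>p\<in>?Pr. ennreal (?q p)) = ?S" by (simp add: case_prod_beta')
    have qnn: "\<And>p. p \<in> ?Pr \<Longrightarrow> 0 \<le> ?q p" using psi_nn by auto
    have qfin: "(\<Sum>\<^sub>\<infinity>p\<in>?Pr. ennreal (?q p)) < \<infinity>" unfolding qS by (rule Sfin)
    have qsum: "?q summable_on ?Pr"
      by (rule infsum_ennreal_fin(1)[OF qnn qfin])
    have qval: "?S = ennreal (infsum ?q ?Pr)"
      using infsum_ennreal_fin(2)[OF qnn qfin] unfolding qS .
    have qsum': "(\<lambda>(x,y). psi \<phi> K x y) summable_on (Sigma \<eta> (\<lambda>x. \<eta> - {x}))"
      using qsum unfolding PrS by (simp add: case_prod_beta')
    have inner: "(\<Sum>\<^sub>\<infinity>y\<in>\<eta>-{x}. ennreal (psi \<phi> K x y)) = ennreal (\<Sum>\<^sub>\<infinity>y\<in>\<eta>-{x}. psi \<phi> K x y)"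
      if x: "x \<in> \<eta>" for x
      by (rule infsum_ennreal_fin(2)) (use psi_nn slicePsi[OF x] Sfin in \<open>auto intro: le_less_trans\<close>)
    have "(\<Sum>\<^sub>\<infinity>x\<in>\<eta>. \<Sum>\<^sub>\<infinity>y\<in>\<eta>-{x}. ennreal (psi \<phi> K x y)) =
          (\<Sum>\<^sub>\<infinity>x\<in>\<eta>. ennreal (\<Sum>\<^sub>\<infinity>y\<in>\<eta>-{x}. psi \<phi> K x y))"
      by (intro infsum_cong inner)
    also have "\<dots> = ennreal (\<Sum>\<^sub>\<infinity>x\<in>\<eta>. \<Sum>\<^sub>\<infinity>y\<in>\<eta>-{x}. psi \<phi> K x y)"
    proof (rule infsum_ennreal_real)
      show "(\<lambda>x. \<Sum>\<^sub>\<infinity>y\<in>\<eta>-{x}. psi \<phi> K x y) summable_on \<eta>"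
        by (rule summable_on_Sigma_banach[OF qsum'])
      show "0 \<le> (\<Sum>\<^sub>\<infinity>y\<in>\<eta>-{x}. psi \<phi> K x y)" for x
        using psi_nn by (intro infsum_nonneg) auto
    qed
    also have "(\<Sum>\<^sub>\<infinity>x\<in>\<eta>. \<Sum>\<^sub>\<infinity>y\<in>\<eta>-{x}. psi \<phi> K x y) = infsum (\<lambda>(x,y). psi \<phi> K x y) (Sigma \<eta> (\<lambda>x. \<eta> - {x}))"
      by (rule infsum_Sigma'_banach[OF qsum'])
    also have "\<dots> = infsum ?q ?Pr" unfolding PrS by (simp add: case_prod_beta')
    finally show ?thesis using qval by simp
  qed
  have sumE: "(\<Sum>\<^sub>\<infinity>x\<in>\<eta>. E x) = pair_h h \<eta> + ?S"
    unfolding E_def pair_h_def SigmaS[symmetric] by (rule infsum_add) simp_all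
  have sumEe: "(\<Sum>\<^sub>\<infinity>x\<in>\<eta>. ennreal (e x)) = pair_h h \<eta> + ?S"
    unfolding sumE[symmetric] using Ee by (intro infsum_cong) auto
  have e_nn: "0 \<le> e x" for x unfolding e_def by simp
  have sumEfin: "(\<Sum>\<^sub>\<infinity>x\<in>\<eta>. ennreal (e x)) < \<infinity>" unfolding sumEe using ph_fin Sfin by simp
  have e_sum: "e summable_on \<eta>" by (rule infsum_ennreal_fin(1)[OF e_nn sumEfin])
  have e_inf: "ennreal (infsum e \<eta>) = pair_h h \<eta> + ?S"
    using infsum_ennreal_fin(2)[OF e_nn sumEfin] sumEe by simp
  have e_val: "infsum e \<eta> = P + 2 * Vr"
  proof -
    have a: "pair_h h \<eta> + ?S = ennreal (P + 2 * Vr)"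
      unfolding S2 Pe Ve using P0 Vr0 by (simp add: ennreal_plus ennreal_mult)
    have "ennreal (infsum e \<eta>) = ennreal (P + 2 * Vr)" unfolding e_inf a ..
    moreover have "0 \<le> infsum e \<eta>" using e_nn by (intro infsum_nonneg) auto
    ultimately show ?thesis using P0 Vr0 by (subst (asm) ennreal_inj) auto
  qed
  have sum1: "(\<lambda>x. ?F (\<eta> - {x}) - ?F \<eta>) summable_on \<eta>"
  proof -
    have "(\<lambda>x. - e x) summable_on \<eta>" using e_sum by (simp add: summable_on_uminus)
    then show ?thesis by (rule summable_on_cong[THEN iffD1, rotated]) (simp add: Fdiff)
  qed
  have sum1v: "(\<Sum>\<^sub>\<infinity>x\<in>\<eta>. ?F (\<eta> - {x}) - ?F \<eta>) = - (P + 2 * Vr)"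
  proof -
    have "(\<Sum>\<^sub>\<infinity>x\<in>\<eta>. ?F (\<eta> - {x}) - ?F \<eta>) = (\<Sum>\<^sub>\<infinity>x\<in>\<eta>. - e x)" by (intro infsum_cong) (simp add: Fdiff)
    also have "\<dots> = - infsum e \<eta>" by (rule infsum_uminus)
    finally show ?thesis using e_val by simp
  qed
  define dr where "dr x = (if x \<in> \<eta> then 0 else enn2real (D x))" for x
  have Fins: "?F (insert x \<eta>) - ?F \<eta> = dr x" for x
  proof (cases "x \<in> \<eta>")
    case True then show ?thesis unfolding dr_def by (simp add: insert_absorb)
  next
    case False then show ?thesis unfolding dr_def
      using W_fin Dfin[OF False] by (simp add: Wins enn2real_plus)
  qed
  have bm: "(\<lambda>x. b x \<eta>) \<in> borel_measurable lborel"
  proof -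
    have "\<eta> \<in> space (GammaG_M \<epsilon>)" using etaG by (simp add: GammaG_M_def space_measure_of_conv)
    then have "(\<lambda>x. (x, \<eta>)) \<in> measurable lborel (lborel \<Otimes>\<^sub>M GammaG_M \<epsilon>)" by (rule measurable_Pair2')
    from measurable_comp[OF this b_meas] show ?thesis by (simp add: o_def)
  qed
  have psim: "(\<lambda>x. ennreal (psi \<phi> K x y)) \<in> borel_measurable lborel" for y
  proof -
    have [measurable]: "(\<lambda>x. psi \<phi> K x y) \<in> borel_measurable borel" by (rule psi_meas[OF K_mono phi_meas])
    show ?thesis by simp
  qed
  have hm[measurable]: "h \<in> borel_measurable borel" by (rule h_meas)
  have sm: "(\<lambda>x. \<Sum>\<^sub>\<infinity>y\<in>\<eta>. ennreal (psi \<phi> K x y)) \<in> borel_measurable lborel"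
    by (rule measurable_infsum_enn[OF cnt psim])
  have Dm: "D \<in> borel_measurable lborel"
  proof -
    have [measurable]: "(\<lambda>x. \<Sum>\<^sub>\<infinity>y\<in>\<eta>. ennreal (psi \<phi> K x y)) \<in> borel_measurable borel" using sm by simp
    show ?thesis unfolding D_def by simp
  qed
  have etaS: "\<eta> \<in> sets lborel" using countable_imp_null_set_lborel[OF cnt] by (auto simp: null_sets_def)
  have drm: "dr \<in> borel_measurable lborel"
    unfolding dr_def by (rule measurable_If_set) (use Dm etaS in auto)
  have Jm: "(\<lambda>x. b x \<eta> * dr x) \<in> borel_measurable lborel"
    using bm drm by (rule borel_measurable_times)
  have dr_nn: "0 \<le> dr x" for x unfolding dr_def by simp
  have J_nn: "0 \<le> b x \<eta> * dr x" for x using b_nn dr_nn by simp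
  have dr_le: "ennreal (dr x) \<le> D x" for x
  proof (cases "x \<in> \<eta>")
    case False then show ?thesis unfolding dr_def using Dfin[OF False] by simp
  qed (simp add: dr_def)
  have J_le: "ennreal (b x \<eta> * dr x) \<le> ennreal bb * D x" for x
  proof -
    have "ennreal (b x \<eta> * dr x) \<le> ennreal (bb * dr x)" using b_le dr_nn by (intro ennreal_leI mult_right_mono) auto
    also have "\<dots> = ennreal bb * ennreal (dr x)" using bb0 dr_nn by (simp add: ennreal_mult)
    also have "\<dots> \<le> ennreal bb * D x" by (intro mult_left_mono dr_le) simp
    finally show ?thesis .
  qed
  have phiKm: "(\<lambda>x. ennreal (\<phi> x * K (dist y x))) \<in> borel_measurable lborel" for y
  proof -
    have [measurable]: "(\<lambda>x. \<phi> x * K (dist y x)) \<in> borel_measurable borel" by (rule phiK_meas[OF K_mono phi_meas])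
    show ?thesis by simp
  qed
  have int_psi: "(\<integral>\<^sup>+x. ennreal (psi \<phi> K x y) \<partial>lborel) \<le> ennreal (\<phi> y) * ennreal C1" for y
  proof -
    have "(\<integral>\<^sup>+x. ennreal (psi \<phi> K x y) \<partial>lborel) = (\<integral>\<^sup>+x. ennreal (\<phi> y) * ennreal (\<phi> x * K (dist y x)) \<partial>lborel)"
    proof (intro nn_integral_cong)
      fix x
      have "psi \<phi> K x y = \<phi> y * (\<phi> x * K (dist y x))" unfolding psi_def by (simp add: dist_commute mult_ac)
      then show "ennreal (psi \<phi> K x y) = ennreal (\<phi> y) * ennreal (\<phi> x * K (dist y x))"
        using phi_pos[of y] by (simp add: ennreal_mult')
    qed
    also have "\<dots> = ennreal (\<phi> y) * (\<integral>\<^sup>+x. ennreal (\<phi> x * K (dist y x)) \<partial>lborel)"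
      by (rule nn_integral_cmult[OF phiKm])
    also have "\<dots> \<le> ennreal (\<phi> y) * ennreal C1"
      by (intro mult_left_mono C1_bound) simp
    finally show ?thesis .
  qed
  have intD: "(\<integral>\<^sup>+x. D x \<partial>lborel) \<le> ennreal H + (\<Sum>\<^sub>\<infinity>y\<in>\<eta>. ennreal (\<phi> y) * ennreal C1)"
  proof -
    have "(\<integral>\<^sup>+x. D x \<partial>lborel) = (\<integral>\<^sup>+x. ennreal (h x) \<partial>lborel) + (\<integral>\<^sup>+x. (\<Sum>\<^sub>\<infinity>y\<in>\<eta>. ennreal (psi \<phi> K x y)) \<partial>lborel)"
      unfolding D_def by (rule nn_integral_add) (use sm in simp_all)
    also have "(\<integral>\<^sup>+x. (\<Sum>\<^sub>\<infinity>y\<in>\<eta>. ennreal (psi \<phi> K x y)) \<partial>lborel) = (\<Sum>\<^sub>\<infinity>y\<in>\<eta>. \<integral>\<^sup>+x. ennreal (psi \<phi> K x y) \<partial>lborel)"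
      by (rule nn_integral_infsum_enn[OF cnt psim])
    also have "\<dots> \<le> (\<Sum>\<^sub>\<infinity>y\<in>\<eta>. ennreal (\<phi> y) * ennreal C1)"
      by (rule infsum_enn_mono) (rule int_psi)
    finally show ?thesis unfolding He by (simp add: add_left_mono)
  qed
  have bbphi: "ennreal bb * (ennreal (\<phi> y) * ennreal C1) \<le> ennreal (h y) * ennreal (1/2)" for y
  proof -
    have "ennreal bb * (ennreal (\<phi> y) * ennreal C1) = ennreal (bb * (\<phi> y * C1))"
      using bb0 C10 phi_pos[of y] by (simp add: ennreal_mult)
    also have "\<dots> \<le> ennreal (h y * (1/2))" using h_lower[of y] by (intro ennreal_leI) (simp add: mult_ac)
    also have "\<dots> = ennreal (h y) * ennreal (1/2)" by (rule ennreal_mult'') simp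
    finally show ?thesis .
  qed
  have intJ: "(\<integral>\<^sup>+x. ennreal (b x \<eta> * dr x) \<partial>lborel) \<le> ennreal (bb * H + P / 2)"
  proof -
    have "(\<integral>\<^sup>+x. ennreal (b x \<eta> * dr x) \<partial>lborel) \<le> (\<integral>\<^sup>+x. ennreal bb * D x \<partial>lborel)"
      by (intro nn_integral_mono J_le)
    also have "\<dots> = ennreal bb * (\<integral>\<^sup>+x. D x \<partial>lborel)" by (rule nn_integral_cmult[OF Dm])
    also have "\<dots> \<le> ennreal bb * (ennreal H + (\<Sum>\<^sub>\<infinity>y\<in>\<eta>. ennreal (\<phi> y) * ennreal C1))"
      by (intro mult_left_mono intD) simp
    also have "\<dots> = ennreal bb * ennreal H + (\<Sum>\<^sub>\<infinity>y\<in>\<eta>. ennreal bb * (ennreal (\<phi> y) * ennreal C1))"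
      by (simp add: distrib_left infsum_enn_cmult)
    also have "\<dots> \<le> ennreal bb * ennreal H + (\<Sum>\<^sub>\<infinity>y\<in>\<eta>. ennreal (h y) * ennreal (1/2))"
      by (intro add_left_mono infsum_enn_mono bbphi)
    also have "(\<Sum>\<^sub>\<infinity>y\<in>\<eta>. ennreal (h y) * ennreal (1/2)) = pair_h h \<eta> * ennreal (1/2)"
    proof -
      have "(\<Sum>\<^sub>\<infinity>y\<in>\<eta>. ennreal (h y) * ennreal (1/2)) = (\<Sum>\<^sub>\<infinity>y\<in>\<eta>. ennreal (1/2) * ennreal (h y))"
        by (intro infsum_cong mult.commute)
      also have "\<dots> = ennreal (1/2) * pair_h h \<eta>" unfolding pair_h_def by (rule infsum_enn_cmult[OF ennreal_less_top])
      also have "\<dots> = pair_h h \<eta> * ennreal (1/2)" by (rule mult.commute)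
      finally show ?thesis .
    qed
    also have "ennreal bb * ennreal H + pair_h h \<eta> * ennreal (1/2) = ennreal (bb * H + P / 2)"
    proof -
      have e1: "ennreal bb * ennreal H = ennreal (bb * H)" using bb0 H0 by (rule ennreal_mult[symmetric])
      have e2: "ennreal P * ennreal (1/2) = ennreal (P / 2)"
        using ennreal_mult[of P "1/2", symmetric] P0 by simp
      show ?thesis unfolding Pe e1 e2 using bb0 H0 P0 by (intro ennreal_plus[symmetric]) auto
    qed
    finally show ?thesis .
  qed
  have intJ_fin: "(\<integral>\<^sup>+x. ennreal (b x \<eta> * dr x) \<partial>lborel) < \<infinity>"
    using le_less_trans[OF intJ] by simp
  have Jint: "integrable lborel (\<lambda>x. b x \<eta> * dr x)"
    by (rule integrableI_nonneg[OF Jm]) (use J_nn intJ_fin in auto)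
  define I where "I = (\<integral>x. b x \<eta> * dr x \<partial>lborel)"
  have I_eq: "I = enn2real (\<integral>\<^sup>+x. ennreal (b x \<eta> * dr x) \<partial>lborel)"
    unfolding I_def by (rule integral_eq_nn_integral[OF Jm]) (use J_nn in auto)
  have I0: "0 \<le> I" unfolding I_eq by simp
  have I_le: "I \<le> bb * H + P / 2"
  proof -
    have "I \<le> enn2real (ennreal (bb * H + P / 2))" unfolding I_eq by (rule enn2real_mono[OF intJ]) simp
    moreover have "enn2real (ennreal (bb * H + P / 2)) = bb * H + P / 2"
      using bb0 H0 P0 by (intro enn2real_ennreal) simp
    ultimately show ?thesis by simp
  qed
  have Jfun: "(\<lambda>x. b x \<eta> * (?F (insert x \<eta>) - ?F \<eta>)) = (\<lambda>x. b x \<eta> * dr x)" using Fins by simp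
  have Ldef: "Lop_defined b ?F \<eta>" unfolding Lop_defined_def Jfun using sum1 Jint by simp
  have Lval: "Lop b ?F \<eta> = - (P + 2 * Vr) + I" unfolding Lop_def Jfun sum1v I_def ..
  have Wval: "enn2real (Wfun h \<phi> K \<eta>) = P + Vr" by (rule FW)
  have Hval: "enn2real (\<integral>\<^sup>+ x. ennreal (h x) \<partial>lborel) = H" unfolding H_def ..
  have bH: "0 \<le> bb * H" using bb0 H0 by simp
  have fin: "\<bar>Lop b ?F \<eta>\<bar> \<le> bb * enn2real (\<integral>\<^sup>+ x. ennreal (h x) \<partial>lborel) + 2 * enn2real (Wfun h \<phi> K \<eta>)"
    unfolding Lval Wval Hval using I0 I_le P0 Vr0 bH by (simp add: abs_le_iff) 
  show ?thesis using hint W_fin AEpart Ldef fin by simp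
qed

end
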